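(* For every bunch $\Delta$ and formula $\varphi$: if $[\![\lfloor\Delta\rfloor]\!]\subseteq[\![\varphi]\!]$ holds in the BI algebra $\mathcal C$ (with atoms interpreted by $[\![a]\!]=[\![a]\!]^{\mathrm{out}}$), then $\Delta\vdash_{\mathsf{cf}}\varphi$.
   Context: Formulas of BI: $\varphi,\psi ::= \top \mid \bot \mid \varphi\wedge\psi \mid \varphi\vee\psi \mid \varphi\to\psi \mid \mathsf{emp} \mid \varphi\ast\psi \mid \varphi -\!\!\ast\, \psi \mid a$, $a\in\mathrm{Atom}$. Bunches are finite binary trees whose leaves are formulas or empty bunches $\varnothing_m,\varnothing_a$ and whose internal nodes are labelled by the multiplicative comma ($\Delta_1\mathbin{,}\Delta_2$) or the additive semicolon ($\Delta_1\mathbin{;}\Delta_2$). A bunched context $\Delta(-)$ is a bunch with one leaf replaced by a hole; $\Delta(\Gamma)$ fills it with $\Gamma$. $\lfloor\Delta\rfloor$ is the formula obtained from $\Delta$ by replacing $\mathbin{,}$ by $\ast$, $\varnothing_m$ by $\mathsf{emp}$, $\mathbin{;}$ by $\wedge$, $\varnothing_a$ by $\top$. Bunch equivalence $\equiv$ is the least equivalence relation making $\mathbin{,}$ commutative, associative with unit $\varnothing_m$, $\mathbin{;}$ commutative, associative with unit $\varnothing_a$, and closed under contexts; $\mathrm{Bunch}$ is the set of bunches modulo $\equiv$. The cut-free BI sequent calculus ($\Delta\vdash_{\mathsf{cf}}\varphi$) has the rules: (ax) $a\vdash a$ for atoms $a$; (equiv) from $\Delta'\vdash\varphi$, $\Delta\equiv\Delta'$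 infer $\Delta\vdash\varphi$; (W;) from $\Delta(\Delta_1)\vdash\varphi$ infer $\Delta(\Delta_1\mathbin{;}\Delta_2)\vdash\varphi$; (C;) from $\Delta(\Delta_1\mathbin{;}\Delta_1)\vdash\varphi$ infer $\Delta(\Delta_1)\vdash\varphi$; (empR) $\varnothing_m\vdash\mathsf{emp}$; (empL) from $\Delta(\varnothing_m)\vdash\varphi$ infer $\Delta(\mathsf{emp})\vdash\varphi$; ($\ast$R) from $\Delta_1\vdash\varphi$, $\Delta_2\vdash\psi$ infer $\Delta_1\mathbin{,}\Delta_2\vdash\varphi\ast\psi$; ($\ast$L) from $\Delta(\varphi\mathbin{,}\psi)\vdash\chi$ infer $\Delta(\varphi\ast\psi)\vdash\chi$; ($-\!\ast$R) from $\Delta\mathbin{,}\varphi\vdash\psi$ infer $\Delta\vdash\varphi-\!\!\ast\,\psi$; ($-\!\ast$L) from $\Delta_1\vdash\varphi$, $\Delta(\Delta_2\mathbin{,}\psi)\vdash\chi$ infer $\Delta((\Delta_1\mathbin{,}\Delta_2)\mathbin{,}(\varphi-\!\!\ast\,\psi))\vdash\chi$; ($\top$R) $\varnothing_a\vdash\top$; ($\top$L) from $\Delta(\varnothing_a)\vdash\varphi$ infer $\Delta(\top)\vdash\varphi$; ($\wedge$R) from $\Delta_1\vdash\varphi$, $\Delta_2\vdash\psi$ infer $\Delta_1\mathbin{;}\Delta_2\vdash\varphi\wedge\psi$; ($\wedge$L) from $\Delta(\varphi\mathbin{;}\psi)\vdash\chi$ infer $\Delta(\varphi\wedge\psi)\vdash\chi$;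 ($\to$R) from $\Delta\mathbin{;}\varphi\vdash\psi$ infer $\Delta\vdash\varphi\to\psi$; ($\to$L) from $\Delta_1\vdash\varphi$, $\Delta(\Delta_2\mathbin{;}\psi)\vdash\chi$ infer $\Delta((\Delta_1\mathbin{;}\Delta_2)\mathbin{;}(\varphi\to\psi))\vdash\chi$; ($\bot$L) $\Delta(\bot)\vdash\varphi$; ($\vee$R1/2) from $\Delta\vdash\varphi$ (resp. $\Delta\vdash\psi$) infer $\Delta\vdash\varphi\vee\psi$; ($\vee$L) from $\Delta(\varphi)\vdash\chi$, $\Delta(\psi)\vdash\chi$ infer $\Delta(\varphi\vee\psi)\vdash\chi$. (No cut rule.) For a formula $\varphi$, $[\![\varphi]\!]^{\mathrm{out}}=\{\Delta\in\mathrm{Bunch}\mid\Delta\vdash_{\mathsf{cf}}\varphi\}$. For $X\subseteq\mathrm{Bunch}$, $\mathrm{cl}(X)=\bigcap\{[\![\varphi]\!]^{\mathrm{out}}\mid X\subseteq[\![\varphi]\!]^{\mathrm{out}}\}$, and $\mathcal C=\{X\subseteq\mathrm{Bunch}\mid X=\mathrm{cl}(X)\}$. $\mathcal C$ is a BI algebra with operations: $\mathsf{emp}=\mathrm{cl}(\{\varnothing_m\})$, $\top=\mathrm{Bunch}$, $\bot=\mathrm{cl}(\emptyset)$, $X\vee Y=\mathrm{cl}(X\cup Y)$, $X\wedge Y=X\cap Y$, $X\ast Y=\mathrm{cl}(\{\Delta\mathbin{,}\Delta'\mid\Delta\in X,\Delta'\in Y\})$, $X-\!\!\ast\,Y=\{\Delta\mid\forall\Delta'\in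 X.\ (\Delta\mathbin{,}\Delta')\in Y\}$, $X\to Y=\{\Delta\mid\forall\Delta'\in X.\ (\Delta\mathbin{;}\Delta')\in Y\}$; the order is inclusion. Formulas are interpreted homomorphically in $\mathcal C$ given the interpretation of atoms. *)

theory Defs
  imports Main
begin

datatype 'a fm =
    FTop | FBot | FAnd "'a fm" "'a fm" | FOr "'a fm" "'a fm" | FImp "'a fm" "'a fm"
  | FEmp | FStar "'a fm" "'a fm" | FWand "'a fm" "'a fm" | FAtom 'a

datatype 'a bunch =
    BFm "'a fm"
  | EmpM
  | EmpA
  | Comma "'a bunch" "'a bunch"
  | Semi "'a bunch" "'a bunch"

datatype 'a bctx =
    Hole
  | CommaL "'a bctx" "'a bunch" | CommaR "'a bunch" "'a bctx"
  | SemiL "'a bctx" "'a bunch"  | SemiR "'a bunch" "'a bctx"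

fun fill :: "'a bctx \<Rightarrow> 'a bunch \<Rightarrow> 'a bunch" where
  "fill Hole G = G"
| "fill (CommaL C D) G = Comma (fill C G) D"
| "fill (CommaR D C) G = Comma D (fill C G)"
| "fill (SemiL C D) G = Semi (fill C G) D"
| "fill (SemiR D C) G = Semi D (fill C G)"

fun floor_b :: "'a bunch \<Rightarrow> 'a fm" where
  "floor_b (BFm \<phi>) = \<phi>"
| "floor_b EmpM = FEmp"
| "floor_b EmpA = FTop"
| "floor_b (Comma D1 D2) = FStar (floor_b D1) (floor_b D2)"
| "floor_b (Semi D1 D2) = FAnd (floor_b D1) (floor_b D2)"

inductive beq :: "'a bunch \<Rightarrow> 'a bunch \<Rightarrow> bool" where
  beq_refl: "beq D D"
| beq_sym: "beq D D' \<Longrightarrow> beq D' D"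
| beq_trans: "beq D1 D2 \<Longrightarrow> beq D2 D3 \<Longrightarrow> beq D1 D3"
| comma_comm: "beq (Comma D1 D2) (Comma D2 D1)"
| comma_assoc: "beq (Comma (Comma D1 D2) D3) (Comma D1 (Comma D2 D3))"
| comma_unit: "beq (Comma D EmpM) D"
| semi_comm: "beq (Semi D1 D2) (Semi D2 D1)"
| semi_assoc: "beq (Semi (Semi D1 D2) D3) (Semi D1 (Semi D2 D3))"
| semi_unit: "beq (Semi D EmpA) D"
| beq_ctx: "beq G G' \<Longrightarrow> beq (fill C G) (fill C G')"

inductive cf :: "'a bunch \<Rightarrow> 'a fm \<Rightarrow> bool" where
  ax: "cf (BFm (FAtom a)) (FAtom a)"
| equiv: "cf D' \<phi> \<Longrightarrow> beq D D' \<Longrightarrow> cf D \<phi>"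
| WSemi: "cf (fill C D1) \<phi> \<Longrightarrow> cf (fill C (Semi D1 D2)) \<phi>"
| CSemi: "cf (fill C (Semi D1 D1)) \<phi> \<Longrightarrow> cf (fill C D1) \<phi>"
| empR: "cf EmpM FEmp"
| empL: "cf (fill C EmpM) \<phi> \<Longrightarrow> cf (fill C (BFm FEmp)) \<phi>"
| starR: "cf D1 \<phi> \<Longrightarrow> cf D2 \<psi> \<Longrightarrow> cf (Comma D1 D2) (FStar \<phi> \<psi>)"
| starL: "cf (fill C (Comma (BFm \<phi>) (BFm \<psi>))) \<chi> \<Longrightarrow> cf (fill C (BFm (FStar \<phi> \<psi>))) \<chi>"
| wandR: "cf (Comma D (BFm \<phi>)) \<psi> \<Longrightarrow> cf D (FWand \<phi> \<psi>)"
| wandL: "cf D1 \<phi> \<Longrightarrow> cf (fill C (Comma D2 (BFm \<psi>))) \<chi> \<Longrightarrow>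
           cf (fill C (Comma (Comma D1 D2) (BFm (FWand \<phi> \<psi>)))) \<chi>"
| topR: "cf EmpA FTop"
| topL: "cf (fill C EmpA) \<phi> \<Longrightarrow> cf (fill C (BFm FTop)) \<phi>"
| andR: "cf D1 \<phi> \<Longrightarrow> cf D2 \<psi> \<Longrightarrow> cf (Semi D1 D2) (FAnd \<phi> \<psi>)"
| andL: "cf (fill C (Semi (BFm \<phi>) (BFm \<psi>))) \<chi> \<Longrightarrow> cf (fill C (BFm (FAnd \<phi> \<psi>))) \<chi>"
| impR: "cf (Semi D (BFm \<phi>)) \<psi> \<Longrightarrow> cf D (FImp \<phi> \<psi>)"
| impL: "cf D1 \<phi> \<Longrightarrow> cf (fill C (Semi D2 (BFm \<psi>))) \<chi> \<Longrightarrow>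
           cf (fill C (Semi (Semi D1 D2) (BFm (FImp \<phi> \<psi>)))) \<chi>"
| botL: "cf (fill C (BFm FBot)) \<phi>"
| orR1: "cf D \<phi> \<Longrightarrow> cf D (FOr \<phi> \<psi>)"
| orR2: "cf D \<psi> \<Longrightarrow> cf D (FOr \<phi> \<psi>)"
| orL: "cf (fill C (BFm \<phi>)) \<chi> \<Longrightarrow> cf (fill C (BFm \<psi>)) \<chi> \<Longrightarrow> cf (fill C (BFm (FOr \<phi> \<psi>))) \<chi>"

definition out :: "'a fm \<Rightarrow> 'a bunch set" where
  "out \<phi> = {D. cf D \<phi>}"

definition cl :: "'a bunch set \<Rightarrow> 'a bunch set" where
  "cl X = \<Inter> {out \<phi> | \<phi>. X \<subseteq> out \<phi>}"

definition C_emp :: "'a bunch set" where "C_emp = cl {EmpM}"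
definition C_top :: "'a bunch set" where "C_top = UNIV"
definition C_bot :: "'a bunch set" where "C_bot = cl {}"
definition C_or :: "'a bunch set \<Rightarrow> 'a bunch set \<Rightarrow> 'a bunch set" where
  "C_or X Y = cl (X \<union> Y)"
definition C_and :: "'a bunch set \<Rightarrow> 'a bunch set \<Rightarrow> 'a bunch set" where
  "C_and X Y = X \<inter> Y"
definition C_star :: "'a bunch set \<Rightarrow> 'a bunch set \<Rightarrow> 'a bunch set" where
  "C_star X Y = cl {Comma D D' | D D'. D \<in> X \<and> D' \<in> Y}"
definition C_wand :: "'a bunch set \<Rightarrow> 'a bunch set \<Rightarrow> 'a bunch set" where
  "C_wand X Y = {D. \<forall>D'\<in>X. Comma D D' \<in> Y}"
definition C_imp :: "'a bunch set \<Rightarrow> 'a bunch set \<Rightarrow> 'a bunch set" where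
  "C_imp X Y = {D. \<forall>D'\<in>X. Semi D D' \<in> Y}"

fun interp :: "'a fm \<Rightarrow> 'a bunch set" where
  "interp FTop = C_top"
| "interp FBot = C_bot"
| "interp (FAnd \<phi> \<psi>) = C_and (interp \<phi>) (interp \<psi>)"
| "interp (FOr \<phi> \<psi>) = C_or (interp \<phi>) (interp \<psi>)"
| "interp (FImp \<phi> \<psi>) = C_imp (interp \<phi>) (interp \<psi>)"
| "interp FEmp = C_emp"
| "interp (FStar \<phi> \<psi>) = C_star (interp \<phi>) (interp \<psi>)"
| "interp (FWand \<phi> \<psi>) = C_wand (interp \<phi>) (interp \<psi>)"
| "interp (FAtom a) = out (FAtom a)"

end

theory Submission
  imports Defs
begin

definition good :: "'a bunch set \<Rightarrow> bool" where
"good X \<longleftrightarrow> (\<forall>C D1 D2. fill C D1 \<in> X \<longrightarrow> fill C (Semi D1 D2) \<in> X) \<and>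
 (\<forall>C \<phi> \<psi>. fill C (Semi (BFm \<phi>) (BFm \<psi>)) \<in> X \<longrightarrow> fill C (BFm (FAnd \<phi> \<psi>)) \<in> X) \<and>
 (\<forall>C D1 D2 \<phi> \<psi>. cf D1 \<phi> \<longrightarrow> fill C (Semi D2 (BFm \<psi>)) \<in> X \<longrightarrow>
     fill C (Semi (Semi D1 D2) (BFm (FImp \<phi> \<psi>))) \<in> X) \<and>
 (\<forall>C D1 D2 \<phi> \<psi>. cf D1 \<phi> \<longrightarrow> fill C (Comma D2 (BFm \<psi>)) \<in> X \<longrightarrow>
     fill C (Comma (Comma D1 D2) (BFm (FWand \<phi> \<psi>))) \<in> X) \<and>
 (\<forall>D D'. D' \<in> X \<longrightarrow> beq D D' \<longrightarrow> D \<in> X)"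

lemma good_out: "good (out \<chi>)"
  unfolding good_def out_def by (auto intro: cf.intros)

lemma good_Inter: "(\<And>X. X \<in> F \<Longrightarrow> good X) \<Longrightarrow> good (\<Inter>F)"
  unfolding good_def by blast

lemma good_cl: "good (cl X)"
  unfolding cl_def by (rule good_Inter) (auto simp: good_out)

lemma good_int: "good X \<Longrightarrow> good Y \<Longrightarrow> good (X \<inter> Y)"
  using good_Inter[of "{X,Y}"] by auto

lemma fillCL: "Comma (fill C D) D' = fill (CommaL C D') D" by simp
lemma fillSL: "Semi (fill C D) D' = fill (SemiL C D') D" by simp

lemma beqCL: "beq D D0 \<Longrightarrow> beq (Comma D D') (Comma D0 D')"
  using beq_ctx[of D D0 "CommaL Hole D'"] by simp
lemma beqSL: "beq D D0 \<Longrightarrow> beq (Semi D D') (Semi D0 D')"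
  using beq_ctx[of D D0 "SemiL Hole D'"] by simp

lemma good_wand: assumes "good Y" shows "good (C_wand X Y)"
  using assms unfolding good_def C_wand_def
  apply (simp only: fillCL mem_Collect_eq)
  apply (intro conjI allI impI ballI)
  apply blast
  apply blast
  apply blast
  apply blast
  apply (meson beqCL)
  done

lemma good_imp: assumes "good Y" shows "good (C_imp X Y)"
  using assms unfolding good_def C_imp_def
  apply (simp only: fillSL mem_Collect_eq)
  apply (intro conjI allI impI ballI)
  apply blast
  apply blast
  apply blast
  apply blast
  apply (meson beqSL)
  done

lemma cl_sup: "X \<subseteq> cl X" unfolding cl_def by blast

lemma cl_le: "X \<subseteq> out \<phi> \<Longrightarrow> cl X \<subseteq> out \<phi>" unfolding cl_def by blast

lemma main: "BFm \<phi> \<in> interp \<phi> \<and> interp \<phi> \<subseteq> out \<phi> \<and> good (interp \<phi>)"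
proof (induction \<phi>)
  case FTop
  have "cf D FTop" for D :: "'a bunch"
  proof -
    have "cf (fill Hole (Semi EmpA D)) FTop" by (rule WSemi) (simp add: topR)
    moreover have "beq D (Semi EmpA D)"
      by (meson beq_sym beq_trans semi_comm semi_unit)
    ultimately show ?thesis by (simp add: equiv)
  qed
  then show ?case by (auto simp: C_top_def out_def good_def)
next
  case FBot
  have "BFm FBot \<in> out \<chi>" for \<chi> :: "'a fm"
    using botL[of Hole \<chi>] by (simp add: out_def)
  moreover have "good (interp (FBot :: 'a fm))" by (simp add: C_bot_def good_cl)
  ultimately show ?case by (auto simp: C_bot_def cl_def)
next
  case (FAnd \<phi> \<psi>)
  then have g: "good (interp \<phi>)" "good (interp \<psi>)" by auto
  have a: "interp (FAnd \<phi> \<psi>) \<subseteq> out (FAnd \<phi> \<psi>)"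
  proof
    fix D assume "D \<in> interp (FAnd \<phi> \<psi>)"
    then have "cf D \<phi>" "cf D \<psi>" using FAnd by (auto simp: C_and_def out_def)
    then have "cf (fill Hole (Semi D D)) (FAnd \<phi> \<psi>)" by (simp add: andR)
    then show "D \<in> out (FAnd \<phi> \<psi>)" using CSemi out_def by fastforce
  qed
  have "fill Hole (Semi (BFm \<phi>) (BFm \<psi>)) \<in> interp \<phi>"
    using g(1) FAnd unfolding good_def by (metis fill.simps(1))
  then have 1: "BFm (FAnd \<phi> \<psi>) \<in> interp \<phi>"
    using g(1) unfolding good_def by (metis fill.simps(1))
  have "fill Hole (Semi (BFm \<psi>) (BFm \<phi>)) \<in> interp \<psi>"
    using g(2) FAnd unfolding good_def by (metis fill.simps(1))
  then have "fill Hole (Semi (BFm \<phi>) (BFm \<psi>)) \<in> interp \<psi>"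
    using g(2) semi_comm unfolding good_def by (metis fill.simps(1))
  then have 2: "BFm (FAnd \<phi> \<psi>) \<in> interp \<psi>"
    using g(2) unfolding good_def by (metis fill.simps(1))
  show ?case using 1 2 a g by (simp add: C_and_def good_int)
next
  case (FOr \<phi> \<psi>)
  have a: "interp (FOr \<phi> \<psi>) \<subseteq> out (FOr \<phi> \<psi>)"
    unfolding interp.simps C_or_def
  proof (rule cl_le)
    show "interp \<phi> \<union> interp \<psi> \<subseteq> out (FOr \<phi> \<psi>)"
      using FOr by (auto simp: out_def intro: orR1 orR2)
  qed
  have "BFm (FOr \<phi> \<psi>) \<in> out \<chi>" if "interp \<phi> \<union> interp \<psi> \<subseteq> out \<chi>" for \<chi>
  proof -
    have "cf (fill Hole (BFm \<phi>)) \<chi>" "cf (fill Hole (BFm \<psi>)) \<chi>"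
      using that FOr by (auto simp: out_def)
    then have "cf (fill Hole (BFm (FOr \<phi> \<psi>))) \<chi>" by (rule orL)
    then show ?thesis by (simp add: out_def)
  qed
  moreover have "good (interp (FOr \<phi> \<psi>))" by (simp add: C_or_def good_cl)
  ultimately show ?case using a by (auto simp: C_or_def cl_def)
next
  case (FImp \<phi> \<psi>)
  have a: "interp (FImp \<phi> \<psi>) \<subseteq> out (FImp \<phi> \<psi>)"
  proof
    fix D assume "D \<in> interp (FImp \<phi> \<psi>)"
    then have "Semi D (BFm \<phi>) \<in> interp \<psi>" using FImp by (auto simp: C_imp_def)
    then have "cf (Semi D (BFm \<phi>)) \<psi>" using FImp by (auto simp: out_def)
    then show "D \<in> out (FImp \<phi> \<psi>)" by (simp add: out_def impR)
  qed
  have g: "good (interp \<psi>)" using FImp by auto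
  have b: "Semi (BFm (FImp \<phi> \<psi>)) D' \<in> interp \<psi>" if "D' \<in> interp \<phi>" for D'
  proof -
    have c: "cf D' \<phi>" using that FImp by (auto simp: out_def)
    have "beq (Semi EmpA (BFm \<psi>)) (BFm \<psi>)"
      by (meson beq_trans semi_comm semi_unit)
    then have "fill Hole (Semi EmpA (BFm \<psi>)) \<in> interp \<psi>"
      using g FImp unfolding good_def by auto
    then have "fill Hole (Semi (Semi D' EmpA) (BFm (FImp \<phi> \<psi>))) \<in> interp \<psi>"
      using g c unfolding good_def by blast
    moreover have "beq (Semi (BFm (FImp \<phi> \<psi>)) D') (Semi (Semi D' EmpA) (BFm (FImp \<phi> \<psi>)))"
      by (meson beqSL beq_sym beq_trans semi_comm semi_unit)
    ultimately show ?thesis using g unfolding good_def by auto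
  qed
  have "good (interp (FImp \<phi> \<psi>))" using g by (simp add: good_imp)
  then show ?case using a b by (auto simp: C_imp_def)
next
  case FEmp
  have "BFm FEmp \<in> out \<chi>" if "{EmpM} \<subseteq> out \<chi>" for \<chi> :: "'a fm"
    using that empL[of Hole \<chi>] by (simp add: out_def)
  moreover have "{EmpM} \<subseteq> out FEmp" by (simp add: out_def empR)
  moreover have "good (interp (FEmp :: 'a fm))" by (simp add: C_emp_def good_cl)
  ultimately show ?case by (auto simp: C_emp_def cl_def)
next
  case (FStar \<phi> \<psi>)
  let ?S = "{Comma D D' | D D'. D \<in> interp \<phi> \<and> D' \<in> interp \<psi>}"
  have "?S \<subseteq> out (FStar \<phi> \<psi>)" using FStar by (auto simp: out_def intro: starR)
  then have a: "cl ?S \<subseteq> out (FStar \<phi> \<psi>)" by (rule cl_le)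
  have "BFm (FStar \<phi> \<psi>) \<in> out \<chi>" if "?S \<subseteq> out \<chi>" for \<chi>
  proof -
    have "Comma (BFm \<phi>) (BFm \<psi>) \<in> ?S" using FStar by auto
    then have "cf (fill Hole (Comma (BFm \<phi>) (BFm \<psi>))) \<chi>" using that by (auto simp: out_def)
    then have "cf (fill Hole (BFm (FStar \<phi> \<psi>))) \<chi>" by (rule starL)
    then show ?thesis by (simp add: out_def)
  qed
  moreover have "good (interp (FStar \<phi> \<psi>))" by (simp add: C_star_def good_cl)
  ultimately show ?case using a by (auto simp: C_star_def cl_def)
next
  case (FWand \<phi> \<psi>)
  have a: "interp (FWand \<phi> \<psi>) \<subseteq> out (FWand \<phi> \<psi>)"
  proof
    fix D assume "D \<in> interp (FWand \<phi> \<psi>)"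
    then have "Comma D (BFm \<phi>) \<in> interp \<psi>" using FWand by (auto simp: C_wand_def)
    then have "cf (Comma D (BFm \<phi>)) \<psi>" using FWand by (auto simp: out_def)
    then show "D \<in> out (FWand \<phi> \<psi>)" by (simp add: out_def wandR)
  qed
  have g: "good (interp \<psi>)" using FWand by auto
  have b: "Comma (BFm (FWand \<phi> \<psi>)) D' \<in> interp \<psi>" if "D' \<in> interp \<phi>" for D'
  proof -
    have c: "cf D' \<phi>" using that FWand by (auto simp: out_def)
    have "beq (Comma EmpM (BFm \<psi>)) (BFm \<psi>)"
      by (meson beq_trans comma_comm comma_unit)
    then have "fill Hole (Comma EmpM (BFm \<psi>)) \<in> interp \<psi>"
      using g FWand unfolding good_def by auto
    then have "fill Hole (Comma (Comma D' EmpM) (BFm (FWand \<phi> \<psi>))) \<in> interp \<psi>"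
      using g c unfolding good_def by blast
    moreover have "beq (Comma (BFm (FWand \<phi> \<psi>)) D') (Comma (Comma D' EmpM) (BFm (FWand \<phi> \<psi>)))"
      by (meson beqCL beq_sym beq_trans comma_comm comma_unit)
    ultimately show ?thesis using g unfolding good_def by auto
  qed
  have "good (interp (FWand \<phi> \<psi>))" using g by (simp add: good_wand)
  then show ?case using a b by (auto simp: C_wand_def)
next
  case (FAtom x)
  have "good (interp (FAtom x))" by (simp add: good_out)
  then show ?case by (auto simp: out_def ax)
qed

lemma self_in: "\<Delta> \<in> interp (floor_b \<Delta>)"
proof (induction \<Delta>)
  case (BFm x)
  then show ?case using main[of x] by simp
next
  case EmpM
  then show ?case using cl_sup by (auto simp: C_emp_def)
next
  case EmpA
  then show ?case by (simp add: C_top_def)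
next
  case (Comma D1 D2)
  then show ?case using cl_sup[of "{Comma D D' | D D'. D \<in> interp (floor_b D1) \<and> D' \<in> interp (floor_b D2)}"]
    by (auto simp: C_star_def)
next
  case (Semi D1 D2)
  have g1: "good (interp (floor_b D1))" and g2: "good (interp (floor_b D2))" using main by auto
  have "fill Hole (Semi D1 D2) \<in> interp (floor_b D1)"
    using g1 Semi unfolding good_def by (metis fill.simps(1))
  moreover have "fill Hole (Semi D2 D1) \<in> interp (floor_b D2)"
    using g2 Semi unfolding good_def by (metis fill.simps(1))
  then have "Semi D1 D2 \<in> interp (floor_b D2)"
    using g2 semi_comm unfolding good_def by (metis fill.simps(1))
  ultimately show ?case by (simp add: C_and_def)
qed

theorem theorem6p7:
  fixes \<Delta> :: "'a bunch" and \<phi> :: "'a fm"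
  assumes "interp (floor_b \<Delta>) \<subseteq> interp \<phi>"
  shows "cf \<Delta> \<phi>"
proof -
  have "\<Delta> \<in> out \<phi>" using self_in assms main by blast
  then show ?thesis by (simp add: out_def)
qed

end
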